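(* Consider the networked SIR epidemic-opinion model described in the context, under the standing assumption stated there. If $s_i(0),x_i(0),o_i(0)\in[0,1]$ for all $i\in[n]$, then each susceptible state $s_i(t)$, $i\in[n]$, is monotonically decreasing (non-increasing) in $t\ge 0$.
   Context: There are $n$ communities. For $t\ge0$ and $i\in[n]$, $s_i(t),x_i(t),o_i(t)\in[0,1]$ denote the susceptible proportion, infected proportion and opinion (belief in the severity of the epidemic) of community $i$. The disease transmission network is a directed graph $\mathcal G=(\mathcal V,\mathcal E)$ on $n$ nodes with edge weights $\beta_{ij}>0$ if $(v_j,v_i)\in\mathcal E$ (and $\beta_{ij}=0$ otherwise); $\mathcal N_i=\{v_j:(v_j,v_i)\in\mathcal E\}$. The opinion network is a directed graph $\bar{\mathcal G}$ on the same nodes with nonnegative weights $\bar a_{ij}$ and Laplacian $\bar L=\mathrm{diag}(k_1,\dots,k_n)-\bar A$, where $[\bar A]_{ij}=\bar a_{ij}$ and $k_i=\sum_j \bar a_{ij}$. Parameters: $\beta_{\min}>0$, $\gamma_{\min}>0$, recovery rates $\gamma_i$. The model is $\dot s_i=-s_i\sum_{j\in\mathcal N_i}\big(\beta_{ij}-(\beta_{ij}-\beta_{\min})o_i\big)x_j$, $\dot x_i=s_i\sum_{j\in\mathcal N_i}\big(\beta_{ij}-(\beta_{ij}-\beta_{\min})o_i\big)x_j-\big(\gamma_{\min}+(\gamma_i-\gamma_{\min})o_i\big)x_i$, $\dot o=(\mathbf 1_n-s)-(\bar L+I_n)o$. Standing assumption: for all $i$, $s_i(0),x_i(0),o_i(0)\in[0,1]$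 with $s_i(0)+x_i(0)\le 1$ (the remainder being the recovered proportion), $\gamma_i\ge\gamma_{\min}>0$, $\beta_{ij}\ge\beta_{\min}>0$ for all $j\in\mathcal N_i$, and both $\mathcal G$ and $\bar{\mathcal G}$ are strongly connected. *)

theory Defs
  imports "HOL-Analysis.Analysis"
begin

text \<open>Nodes are 0..<n. A weighted digraph is a weight matrix w, where w i j > 0
  means there is an edge (v_j, v_i), i.e. an edge from node j to node i.\<close>

definition digraph_edges :: "nat \<Rightarrow> (nat \<Rightarrow> nat \<Rightarrow> real) \<Rightarrow> (nat \<times> nat) set" where
  "digraph_edges n w = {(j, i). j < n \<and> i < n \<and> w i j > 0}"

definition strongly_connected :: "nat \<Rightarrow> (nat \<Rightarrow> nat \<Rightarrow> real) \<Rightarrow> bool" where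
  "strongly_connected n w \<longleftrightarrow> (\<forall>i<n. \<forall>j<n. (i, j) \<in> (digraph_edges n w)\<^sup>*)"

definition in_nbrs :: "nat \<Rightarrow> (nat \<Rightarrow> nat \<Rightarrow> real) \<Rightarrow> nat \<Rightarrow> nat set" where
  "in_nbrs n w i = {j. j < n \<and> w i j > 0}"

end

theory Submission
  imports Defs
begin

lemma pp_quot_bound: "\<bar>((max 0 z)^2 - (max 0 0)^2) / (z - 0)\<bar> \<le> \<bar>z::real\<bar>"
proof (cases "z > 0")
  case True
  then have "((max 0 z)^2 - (max 0 0)^2) / (z - 0) = z" by (simp add: power2_eq_square)
  then show ?thesis by simp
next
  case False
  then have "max 0 z = 0" by simp
  then show ?thesis by simp
qed

lemma pp_deriv: "((\<lambda>y::real. (max 0 y)^2) has_real_derivative 2 * max 0 y) (at y)"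
proof (cases "y = 0")
  case True
  have "((\<lambda>z::real. ((max 0 z)^2 - (max 0 0)^2) / (z - 0)) \<longlongrightarrow> 0) (at 0)"
  proof (rule Lim_null_comparison[where g="\<lambda>z. norm z"])
    show "\<forall>\<^sub>F z in at (0::real). norm (((max 0 z)^2 - (max 0 0)^2) / (z - 0)) \<le> norm z"
      by (rule always_eventually) (simp only: real_norm_def pp_quot_bound simp_thms)
    show "((\<lambda>z::real. norm z) \<longlongrightarrow> 0) (at 0)"
      using tendsto_norm[OF tendsto_ident_at[of "0::real" UNIV]] by simp
  qed
  then show ?thesis using True by (simp add: has_field_derivative_iff)
next
  case False
  show ?thesis
  proof (cases "y > 0")
    case True
    have "((\<lambda>y::real. y^2) has_real_derivative 2 * max 0 y) (at y)"
      using DERIV_pow[of 2 y] True by simp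
    then show ?thesis
      by (rule has_field_derivative_transform_within_open[where S="{0<..}"]) (use True in auto)
  next
    case F2: False
    then have "y < 0" using False by auto
    have "((\<lambda>y::real. 0) has_real_derivative 2 * max 0 y) (at y)"
      using DERIV_const[of 0 "at y"] \<open>y<0\<close> by simp
    then show ?thesis
      by (rule has_field_derivative_transform_within_open[where S="{..<0}"]) (use \<open>y<0\<close> in auto)
  qed
qed

lemma deriv_nonpos_mono:
  fixes f f' :: "real \<Rightarrow> real"
  assumes ab: "a \<le> b"
    and d: "\<And>t. a \<le> t \<Longrightarrow> t \<le> b \<Longrightarrow> (f has_real_derivative f' t) (at t within {a..b})"
    and n: "\<And>t. a \<le> t \<Longrightarrow> t \<le> b \<Longrightarrow> f' t \<le> 0"
  shows "f b \<le> f a"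
proof -
  have "\<exists>x\<in>{a..b}. f b - f a = f' x * (b - a)"
    by (rule mvt_very_simple[OF ab, of f "\<lambda>t. (*) (f' t)"])
       (rule has_field_derivative_imp_has_derivative[OF d])
  then obtain z where z: "z \<in> {a..b}" "f b - f a = f' z * (b - a)" by blast
  have "f' z * (b - a) \<le> 0" using n[of z] z(1) ab by (simp add: mult_nonpos_nonneg)
  then show ?thesis using z(2) by linarith
qed

lemma prod3_bound:
  fixes s c x M K L q :: real
  assumes "\<bar>s\<bar> \<le> M" "\<bar>c\<bar> \<le> K" "\<bar>x\<bar> \<le> M" "c \<ge> - L * q" "q \<ge> 0" "L \<ge> 0" "M \<ge> 0" "K \<ge> 0"
  shows "s * c * x \<ge> -(K*M*max 0 (-s) + K*M*max 0 (-x) + L*M*M*q)"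
proof -
  have A: "K*M*max 0 (-s) \<ge> 0" "K*M*max 0 (-x) \<ge> 0" "L*M*M*q \<ge> 0"
    using assms by auto
  have absb: "\<bar>s*c*x\<bar> \<le> M*K*M"
    using assms by (simp add: abs_mult mult_mono' mult_mono)
  show ?thesis
  proof (cases "s \<ge> 0 \<and> x \<ge> 0")
    case True
    have "s*x \<ge> 0" "s*x \<le> M*M" using True assms by (auto intro: mult_mono)
    have "s*c*x = (s*x)*c" by simp
    also have "\<dots> \<ge> (s*x)*(-L*q)" using mult_left_mono[OF assms(4) \<open>s*x\<ge>0\<close>] by simp
    finally have "s*c*x \<ge> -(s*x)*(L*q)" by simp
    moreover have "(s*x)*(L*q) \<le> (M*M)*(L*q)"
      using \<open>s*x \<le> M*M\<close> assms by (simp add: mult_right_mono)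
    ultimately show ?thesis using A by (simp add: algebra_simps)
  next
    case False
    then consider "s < 0" | "x < 0" by linarith
    then show ?thesis
    proof cases
      case 1
      have "\<bar>s*c*x\<bar> = \<bar>s\<bar> * (\<bar>c\<bar>*\<bar>x\<bar>)" by (simp add: abs_mult)
      also have "\<dots> \<le> \<bar>s\<bar> * (K*M)" using assms by (simp add: mult_left_mono mult_mono)
      finally have h: "\<bar>s*c*x\<bar> \<le> \<bar>s\<bar> * (K*M)" .
      have m: "max 0 (-s) = \<bar>s\<bar>" using 1 by simp
      have "s*c*x \<ge> - (max 0 (-s)) * (K*M)" unfolding m using h abs_ge_minus_self[of "s*c*x"] by linarith
      then show ?thesis using A by (simp add: algebra_simps)
    next
      case 2
      have "\<bar>s*c*x\<bar> = \<bar>x\<bar> * (\<bar>c\<bar>*\<bar>s\<bar>)" by (simp add: abs_mult)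
      also have "\<dots> \<le> \<bar>x\<bar> * (K*M)" using assms by (simp add: mult_left_mono mult_mono)
      finally have h: "\<bar>s*c*x\<bar> \<le> \<bar>x\<bar> * (K*M)" .
      have m: "max 0 (-x) = \<bar>x\<bar>" using 2 by simp
      have "s*c*x \<ge> - (max 0 (-x)) * (K*M)" unfolding m using h abs_ge_minus_self[of "s*c*x"] by linarith
      then show ?thesis using A by (simp add: algebra_simps)
    qed
  qed
qed

lemma uv_le:
  fixes u v V :: real
  assumes "0 \<le> u" "0 \<le> v" "u^2 \<le> V" "v^2 \<le> V"
  shows "u * v \<le> V"
proof -
  have "0 \<le> (u - v)^2" by simp
  then have "2 * (u * v) \<le> u^2 + v^2" by (simp add: power2_diff)
  then show ?thesis using assms by linarith
qed

lemma key_bound: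
  fixes S X Op g :: "nat \<Rightarrow> real" and beta a :: "nat \<Rightarrow> nat \<Rightarrow> real"
    and Nb :: "nat \<Rightarrow> nat set" and bm M :: real and n :: nat
  assumes M0: "M \<ge> 0" and bm: "bm > 0"
    and bS: "\<And>j. j < n \<Longrightarrow> \<bar>S j\<bar> \<le> M" and bX: "\<And>j. j < n \<Longrightarrow> \<bar>X j\<bar> \<le> M"
    and bO: "\<And>j. j < n \<Longrightarrow> \<bar>Op j\<bar> \<le> M" and bg: "\<And>j. j < n \<Longrightarrow> \<bar>g j\<bar> \<le> M"
    and ba: "\<And>j k. j < n \<Longrightarrow> k < n \<Longrightarrow> 0 \<le> a j k \<and> a j k \<le> M"
    and bb: "\<And>j k. j < n \<Longrightarrow> k < n \<Longrightarrow> \<bar>beta j k\<bar> \<le> M"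
    and bge: "\<And>j k. j < n \<Longrightarrow> k \<in> Nb j \<Longrightarrow> beta j k \<ge> bm"
    and Nb: "\<And>j. j < n \<Longrightarrow> Nb j \<subseteq> {..<n}"
  defines "F \<equiv> \<lambda>j. (\<Sum>k\<in>Nb j. (beta j k - (beta j k - bm) * Op j) * X k)"
    and "V \<equiv> (\<Sum>j<n. (max 0 (- S j))^2 + (max 0 (- X j))^2 + (max 0 (Op j - 1))^2)"
    and "K \<equiv> M + (M + bm) * M"
  shows "(\<Sum>j<n. 2 * max 0 (- S j) * (- (- S j * F j))
              + 2 * max 0 (- X j) * (- (S j * F j - g j * X j))
              + 2 * max 0 (Op j - 1) * ((1 - S j) - ((\<Sum>k<n. a j k) * Op j - (\<Sum>k<n. a j k * Op k)) - Op j))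
         \<le> real n * (2*(real n*K*M) + 2*M + 2*(real n*(2*K*M + M*M*M)) + 2 + 2*(real n*M)) * V"
proof -
  define r where "r j = max 0 (- S j)" for j
  define p where "p j = max 0 (- X j)" for j
  define q where "q j = max 0 (Op j - 1)" for j
  have r0: "r j \<ge> 0" and p0: "p j \<ge> 0" and q0: "q j \<ge> 0" for j
    by (auto simp: r_def p_def q_def)
  have K0: "K \<ge> 0" using M0 bm by (simp add: K_def)
  have V_eq: "V = (\<Sum>j<n. (r j)^2 + (p j)^2 + (q j)^2)" by (simp add: V_def r_def p_def q_def)
  have term_le: "(r j)^2 + (p j)^2 + (q j)^2 \<le> V" if "j < n" for j
    unfolding V_eq by (rule member_le_sum) (use that in \<open>auto\<close>)
  have rV: "(r j)^2 \<le> V" and pV: "(p j)^2 \<le> V" and qV: "(q j)^2 \<le> V" if "j < n" for j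
    using term_le[OF that] zero_le_power2[of "r j"] zero_le_power2[of "p j"] zero_le_power2[of "q j"]
    by linarith+
  have V0: "V \<ge> 0" unfolding V_eq by (auto intro!: sum_nonneg)
  have cK: "\<bar>beta j k - (beta j k - bm) * Op j\<bar> \<le> K" if "j < n" "k < n" for j k
  proof -
    have "\<bar>beta j k - (beta j k - bm) * Op j\<bar> \<le> \<bar>beta j k\<bar> + \<bar>beta j k - bm\<bar> * \<bar>Op j\<bar>"
      by (metis abs_mult abs_triangle_ineq4)
    also have "\<dots> \<le> M + (M + bm) * M"
      using bb[OF that] bO[OF that(1)] bm M0
      by (intro add_mono mult_mono) auto
    finally show ?thesis by (simp add: K_def)
  qed
  have cq: "beta j k - (beta j k - bm) * Op j \<ge> - M * q j" if "j < n" "k \<in> Nb j" for j k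
  proof -
    have kn: "k < n" using Nb[OF that(1)] that(2) by auto
    have b1: "0 \<le> beta j k - bm" "beta j k - bm \<le> M" using bge[OF that] bb[OF that(1) kn] bm
      by auto
    have "1 - Op j \<ge> - q j" by (simp add: q_def)
    then have "(beta j k - bm) * (1 - Op j) \<ge> (beta j k - bm) * (- q j)"
      using b1 by (intro mult_left_mono) auto
    moreover have "(beta j k - bm) * q j \<le> M * q j" using b1 q0 by (simp add: mult_right_mono)
    ultimately show ?thesis using bm by (simp add: algebra_simps)
  qed
  have cardNb: "real (card (Nb j)) \<le> real n" if "j < n" for j
    using card_mono[OF _ Nb[OF that]] by simp
  have finNb: "finite (Nb j)" if "j < n" for j using Nb[OF that] finite_subset by blast
  have Fb: "\<bar>F j\<bar> \<le> real n * K * M" if "j < n" for j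
  proof -
    have "\<bar>F j\<bar> \<le> (\<Sum>k\<in>Nb j. \<bar>(beta j k - (beta j k - bm) * Op j) * X k\<bar>)"
      unfolding F_def by (rule sum_abs)
    also have "\<dots> \<le> real (card (Nb j)) * (K * M)"
    proof (rule sum_bounded_above)
      fix k assume "k \<in> Nb j"
      then have "k < n" using Nb[OF that] by auto
      then show "\<bar>(beta j k - (beta j k - bm) * Op j) * X k\<bar> \<le> K * M"
        unfolding abs_mult using cK[OF that \<open>k<n\<close>] bX[OF \<open>k<n\<close>] K0
        by (intro mult_mono) auto
    qed
    also have "\<dots> \<le> real n * (K * M)" using cardNb[OF that] K0 M0 by (intro mult_right_mono) auto
    finally show ?thesis by simp
  qed
  have T1: "2 * r j * (- (- S j * F j)) \<le> 2*(real n*K*M) * V" if "j < n" for j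
  proof -
    have e: "r j * S j = - ((r j)^2)" by (simp add: r_def max_def power2_eq_square)
    have "2 * r j * (- (- S j * F j)) = 2 * (r j * S j) * F j" by (simp add: mult.commute mult.left_commute)
    also have "\<dots> = - 2 * (r j)^2 * F j" unfolding e by simp
    also have "\<dots> = 2 * (r j)^2 * (- F j)" by simp
    also have "\<dots> \<le> 2 * (r j)^2 * \<bar>F j\<bar>"
      by (rule mult_left_mono) auto
    also have "\<dots> \<le> (2 * V) * (real n * K * M)"
      using rV[OF that] Fb[OF that] V0 by (intro mult_mono) auto
    finally show ?thesis by (simp add: algebra_simps)
  qed
  have T2: "2 * p j * (- (S j * F j - g j * X j)) \<le> (2*M + 2*(real n*(2*K*M + M*M*M))) * V" if "j < n" for j
  proof -
    have e: "p j * X j = - ((p j)^2)" by (simp add: p_def max_def power2_eq_square)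
    have A: "2 * p j * (g j * X j) \<le> 2 * (M * V)"
    proof -
      have "2 * p j * (g j * X j) = 2 * g j * (p j * X j)" by (simp add: mult.commute mult.left_commute)
      also have "\<dots> = - 2 * g j * (p j)^2" unfolding e by simp
      also have "\<dots> \<le> 2 * M * (p j)^2" using bg[OF that]
        by (intro mult_right_mono) auto
      also have "\<dots> \<le> 2 * M * V" using pV[OF that] M0 by (intro mult_left_mono) auto
      finally show ?thesis by simp
    qed
    have B: "p j * (S j * F j) \<ge> - ((real n*(2*K*M + M*M*M)) * V)"
    proof -
      have "p j * (S j * F j) = (\<Sum>k\<in>Nb j. p j * (S j * (beta j k - (beta j k - bm) * Op j) * X k))"
        unfolding F_def by (simp add: sum_distrib_left algebra_simps)
      also have "\<dots> \<ge> (\<Sum>k\<in>Nb j. - ((2*K*M + M*M*M) * V))"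
      proof (rule sum_mono)
        fix k assume kN: "k \<in> Nb j"
        then have kn: "k < n" using Nb[OF that] by auto
        have pr: "S j * (beta j k - (beta j k - bm) * Op j) * X k \<ge> -(K*M*r j + K*M*p k + M*M*M*q j)"
          unfolding r_def p_def
          by (rule prod3_bound[OF bS[OF that] cK[OF that kn] bX[OF kn] cq[OF that kN] q0 M0 M0 K0])
        have "p j * (S j * (beta j k - (beta j k - bm) * Op j) * X k) \<ge> p j * (-(K*M*r j + K*M*p k + M*M*M*q j))"
          using pr p0 by (simp add: mult_left_mono)
        moreover have "p j * (K*M*r j + K*M*p k + M*M*M*q j) \<le> (2*K*M + M*M*M) * V"
        proof -
          have u1: "p j * r j \<le> V" by (rule uv_le[OF p0 r0 pV[OF that] rV[OF that]])
          have u2: "p j * p k \<le> V" by (rule uv_le[OF p0 p0 pV[OF that] pV[OF kn]])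
          have u3: "p j * q j \<le> V" by (rule uv_le[OF p0 q0 pV[OF that] qV[OF that]])
          have KM: "K*M \<ge> 0" "M*M*M \<ge> 0" using K0 M0 by auto
          have "p j * (K*M*r j + K*M*p k + M*M*M*q j) = K*M*(p j * r j) + K*M*(p j*p k) + M*M*M*(p j * q j)"
            by (simp add: algebra_simps)
          also have "\<dots> \<le> K*M*V + K*M*V + M*M*M*V"
            using u1 u2 u3 KM by (intro add_mono mult_left_mono) auto
          finally show ?thesis by (simp add: algebra_simps)
        qed
        ultimately show "- ((2*K*M + M*M*M) * V) \<le> p j * (S j * (beta j k - (beta j k - bm) * Op j) * X k)"
          by (simp add: algebra_simps)
      qed
      also have "(\<Sum>k\<in>Nb j. - ((2*K*M + M*M*M) * V)) = - (real (card (Nb j)) * ((2*K*M + M*M*M) * V))"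
        by simp
      also have "\<dots> \<ge> - (real n * ((2*K*M + M*M*M) * V))"
        using cardNb[OF that] K0 M0 V0 by (simp add: mult_right_mono)
      finally show ?thesis by (simp add: algebra_simps)
    qed
    have "2 * p j * (- (S j * F j - g j * X j)) = - 2 * (p j * (S j * F j)) + 2 * p j * (g j * X j)"
      by (simp add: algebra_simps)
    also have "\<dots> \<le> 2 * ((real n*(2*K*M + M*M*M)) * V) + 2 * (M * V)" using A B by linarith
    finally show ?thesis by (simp add: algebra_simps)
  qed
  have T3: "2 * q j * ((1 - S j) - ((\<Sum>k<n. a j k) * Op j - (\<Sum>k<n. a j k * Op k)) - Op j) \<le> (2 + 2*(real n*M)) * V"
    if "j < n" for j
  proof -
    have e: "(\<Sum>k<n. a j k) * Op j - (\<Sum>k<n. a j k * Op k) = (\<Sum>k<n. a j k * (Op j - Op k))"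
      by (simp add: sum_distrib_right sum_subtractf right_diff_distrib)
    have A: "q j * (1 - S j - Op j) \<le> V"
    proof (cases "q j > 0")
      case True
      then have "Op j = 1 + q j" by (simp add: q_def max_def split: if_splits)
      then have "q j * (1 - S j - Op j) = q j * (- S j) - (q j)^2" by (simp add: algebra_simps power2_eq_square)
      also have "\<dots> \<le> q j * r j"
      proof -
        have "q j * (- S j) \<le> q j * r j" using q0[of j] by (intro mult_left_mono) (auto simp: r_def)
        then show ?thesis using zero_le_power2[of "q j"] by linarith
      qed
      also have "\<dots> \<le> V" by (rule uv_le[OF q0 r0 qV[OF that] rV[OF that]])
      finally show ?thesis .
    next
      case False
      then have "q j = 0" using q0[of j] by linarith
      then show ?thesis using V0 by simp
    qed
    have B: "q j * (\<Sum>k<n. a j k * (Op k - Op j)) \<le> real n * M * V"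
    proof -
      have "q j * (\<Sum>k<n. a j k * (Op k - Op j)) = (\<Sum>k<n. a j k * (q j * (Op k - Op j)))"
        by (simp add: sum_distrib_left algebra_simps)
      also have "\<dots> \<le> (\<Sum>k<n. M * V)"
      proof (rule sum_mono)
        fix k assume "k \<in> {..<n}"
        then have kn: "k < n" by simp
        have "q j * (Op k - Op j) \<le> q j * q k"
        proof (cases "q j > 0")
          case True
          then have "Op j = 1 + q j" by (simp add: q_def max_def split: if_splits)
          moreover have "Op k \<le> 1 + q k" by (simp add: q_def)
          ultimately have "Op k - Op j \<le> q k" using q0[of j] by linarith
          then show ?thesis using q0[of j] by (simp add: mult_left_mono)
        next
          case False
          then have "q j = 0" using q0[of j] by linarith
          then show ?thesis by simp
        qed
        also have "\<dots> \<le> V" by (rule uv_le[OF q0 q0 qV[OF that] qV[OF kn]])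
        finally have h: "q j * (Op k - Op j) \<le> V" .
        have "a j k * (q j * (Op k - Op j)) \<le> a j k * V" using h ba[OF that kn] by (simp add: mult_left_mono)
        also have "\<dots> \<le> M * V" using ba[OF that kn] V0 by (simp add: mult_right_mono)
        finally show "a j k * (q j * (Op k - Op j)) \<le> M * V" .
      qed
      also have "\<dots> = real n * M * V" by simp
      finally show ?thesis .
    qed
    have e2: "(\<Sum>k<n. a j k * (Op j - Op k)) = - (\<Sum>k<n. a j k * (Op k - Op j))"
      by (simp add: sum_negf[symmetric] algebra_simps)
    have "2 * q j * ((1 - S j) - ((\<Sum>k<n. a j k) * Op j - (\<Sum>k<n. a j k * Op k)) - Op j)
        = 2 * (q j * (1 - S j - Op j)) + 2 * (q j * (\<Sum>k<n. a j k * (Op k - Op j)))"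
      unfolding e e2 by (simp add: algebra_simps)
    also have "\<dots> \<le> 2 * V + 2 * (real n * M * V)" using A B by linarith
    finally show ?thesis by (simp add: algebra_simps)
  qed
  have "(\<Sum>j<n. 2 * max 0 (- S j) * (- (- S j * F j))
              + 2 * max 0 (- X j) * (- (S j * F j - g j * X j))
              + 2 * max 0 (Op j - 1) * ((1 - S j) - ((\<Sum>k<n. a j k) * Op j - (\<Sum>k<n. a j k * Op k)) - Op j))
        \<le> (\<Sum>j<n. (2*(real n*K*M) + 2*M + 2*(real n*(2*K*M + M*M*M)) + 2 + 2*(real n*M)) * V)"
  proof (rule sum_mono)
    fix j assume "j \<in> {..<n}"
    then have jn: "j < n" by simp
    show "2 * max 0 (- S j) * (- (- S j * F j))
              + 2 * max 0 (- X j) * (- (S j * F j - g j * X j))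
              + 2 * max 0 (Op j - 1) * ((1 - S j) - ((\<Sum>k<n. a j k) * Op j - (\<Sum>k<n. a j k * Op k)) - Op j)
        \<le> (2*(real n*K*M) + 2*M + 2*(real n*(2*K*M + M*M*M)) + 2 + 2*(real n*M)) * V"
    proof -
      have "2 * max 0 (- S j) * (- (- S j * F j))
              + 2 * max 0 (- X j) * (- (S j * F j - g j * X j))
              + 2 * max 0 (Op j - 1) * ((1 - S j) - ((\<Sum>k<n. a j k) * Op j - (\<Sum>k<n. a j k * Op k)) - Op j)
        \<le> 2*(real n*K*M) * V + (2*M + 2*(real n*(2*K*M + M*M*M))) * V + (2 + 2*(real n*M)) * V"
        using add_mono[OF add_mono[OF T1[OF jn] T2[OF jn]] T3[OF jn]] by (simp only: r_def p_def q_def)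
      also have "\<dots> = (2*(real n*K*M) + 2*M + 2*(real n*(2*K*M + M*M*M)) + 2 + 2*(real n*M)) * V"
        by (simp only: distrib_right add.assoc)
      finally show ?thesis .
    qed
  qed
  also have "\<dots> = real n * (2*(real n*K*M) + 2*M + 2*(real n*(2*K*M + M*M*M)) + 2 + 2*(real n*M)) * V"
    by simp
  finally show ?thesis .
qed

theorem lemma2:
  fixes n :: nat
    and beta abar :: "nat \<Rightarrow> nat \<Rightarrow> real"
    and beta_min gamma_min :: real
    and gamma :: "nat \<Rightarrow> real"
    and s x op :: "nat \<Rightarrow> real \<Rightarrow> real"
  assumes beta_nonneg: "\<And>i j. i < n \<Longrightarrow> j < n \<Longrightarrow> beta i j \<ge> 0"
    and abar_nonneg: "\<And>i j. i < n \<Longrightarrow> j < n \<Longrightarrow> abar i j \<ge> 0"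
    and beta_min_pos: "beta_min > 0"
    and gamma_min_pos: "gamma_min > 0"
    and gamma_ge: "\<And>i. i < n \<Longrightarrow> gamma i \<ge> gamma_min"
    and beta_ge: "\<And>i j. i < n \<Longrightarrow> j \<in> in_nbrs n beta i \<Longrightarrow> beta i j \<ge> beta_min"
    and sc_G: "strongly_connected n beta"
    and sc_Gbar: "strongly_connected n abar"
    and init: "\<And>i. i < n \<Longrightarrow> s i 0 \<in> {0..1} \<and> x i 0 \<in> {0..1} \<and> op i 0 \<in> {0..1}
                                  \<and> s i 0 + x i 0 \<le> 1"
    and ds: "\<And>i t. i < n \<Longrightarrow> t \<ge> 0 \<Longrightarrow>
       (s i has_real_derivative
          (- s i t * (\<Sum>j\<in>in_nbrs n beta i. (beta i j - (beta i j - beta_min) * op i t) * x j t)))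
       (at t within {0..})"
    and dx: "\<And>i t. i < n \<Longrightarrow> t \<ge> 0 \<Longrightarrow>
       (x i has_real_derivative
          (s i t * (\<Sum>j\<in>in_nbrs n beta i. (beta i j - (beta i j - beta_min) * op i t) * x j t)
           - (gamma_min + (gamma i - gamma_min) * op i t) * x i t))
       (at t within {0..})"
    and dop: "\<And>i t. i < n \<Longrightarrow> t \<ge> 0 \<Longrightarrow>
       (op i has_real_derivative
          ((1 - s i t) - ((\<Sum>j<n. abar i j) * op i t - (\<Sum>j<n. abar i j * op j t)) - op i t))
       (at t within {0..})"
  shows "\<forall>i<n. \<forall>t1 t2. 0 \<le> t1 \<longrightarrow> t1 \<le> t2 \<longrightarrow> s i t2 \<le> s i t1"
proof -
  define F where "F j t = (\<Sum>k\<in>in_nbrs n beta j. (beta j k - (beta j k - beta_min) * op j t) * x k t)" for j t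
  define g where "g j t = gamma_min + (gamma j - gamma_min) * op j t" for j t
  define V where "V t = (\<Sum>j<n. (max 0 (- s j t))^2 + (max 0 (- x j t))^2 + (max 0 (op j t - 1))^2)" for t
  define V' where "V' t = (\<Sum>j<n. 2 * max 0 (- s j t) * (- (- s j t * F j t))
              + 2 * max 0 (- x j t) * (- (s j t * F j t - g j t * x j t))
              + 2 * max 0 (op j t - 1) * ((1 - s j t) - ((\<Sum>k<n. abar j k) * op j t - (\<Sum>k<n. abar j k * op k t)) - op j t))" for t
  have Nb: "in_nbrs n beta j \<subseteq> {..<n}" for j by (auto simp: in_nbrs_def)
  have dV: "(V has_real_derivative V' t) (at t within {0..})" if t0: "t \<ge> 0" for t
    unfolding V_def[abs_def] V'_def
  proof (rule DERIV_sum)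
    fix j assume "j \<in> {..<n}"
    then have j: "j < n" by simp
    have d1: "((\<lambda>t. - s j t) has_real_derivative - (- s j t * F j t)) (at t within {0..})"
      using DERIV_minus[OF ds[OF j t0]] unfolding F_def .
    have d2: "((\<lambda>t. - x j t) has_real_derivative - (s j t * F j t - g j t * x j t)) (at t within {0..})"
      using DERIV_minus[OF dx[OF j t0]] unfolding F_def g_def .
    have d3: "((\<lambda>t. op j t - 1) has_real_derivative ((1 - s j t) - ((\<Sum>k<n. abar j k) * op j t - (\<Sum>k<n. abar j k * op k t)) - op j t)) (at t within {0..})"
      using DERIV_diff[OF dop[OF j t0] DERIV_const[of 1]] by simp
    show "((\<lambda>t. (max 0 (- s j t))^2 + (max 0 (- x j t))^2 + (max 0 (op j t - 1))^2) has_real_derivative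
        2 * max 0 (- s j t) * (- (- s j t * F j t))
              + 2 * max 0 (- x j t) * (- (s j t * F j t - g j t * x j t))
              + 2 * max 0 (op j t - 1) * ((1 - s j t) - ((\<Sum>k<n. abar j k) * op j t - (\<Sum>k<n. abar j k * op k t)) - op j t))
        (at t within {0..})"
      by (intro DERIV_add DERIV_chain2[where f="\<lambda>y. (max 0 y)^2", OF pp_deriv] d1 d2 d3)
  qed
  have contS: "continuous_on {0..} (s j)" and contX: "continuous_on {0..} (x j)"
    and contO: "continuous_on {0..} (op j)" if j: "j < n" for j
    using DERIV_continuous[OF ds[OF j]] DERIV_continuous[OF dx[OF j]] DERIV_continuous[OF dop[OF j]]
    by (auto simp: continuous_on_eq_continuous_within)
  have V0: "V t \<ge> 0" for t unfolding V_def by (auto intro!: sum_nonneg)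
  have Vinit: "V 0 = 0" unfolding V_def
  proof (rule sum.neutral, rule ballI)
    fix j assume "j \<in> {..<n}"
    then have "s j 0 \<ge> 0" "x j 0 \<ge> 0" "op j 0 \<le> 1" using init by auto
    then have "max 0 (- s j 0) = 0" "max 0 (- x j 0) = 0" "max 0 (op j 0 - 1) = 0" by auto
    then show "(max 0 (- s j 0))^2 + (max 0 (- x j 0))^2 + (max 0 (op j 0 - 1))^2 = 0" by simp
  qed
  have Vzero: "V T = 0" if T0: "T \<ge> 0" for T
  proof -
    define Hb where "Hb t = (\<Sum>j<n. \<bar>s j t\<bar> + \<bar>x j t\<bar> + \<bar>op j t\<bar> + \<bar>g j t\<bar>)" for t
    have "continuous_on {0..T} Hb"
    proof -
      have "continuous_on {0..T} (s j)" "continuous_on {0..T} (x j)" "continuous_on {0..T} (op j)"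
        if "j < n" for j
        using contS[OF that] contX[OF that] contO[OF that] by (auto intro: continuous_on_subset)
      then show ?thesis unfolding Hb_def g_def by (auto intro!: continuous_intros)
    qed
    then obtain B1 where B1: "B1 \<ge> 0" "\<And>t. t \<in> {0..T} \<Longrightarrow> norm (Hb t) \<le> B1"
      using continuous_on_compact_bound[of "{0..T}" Hb] by auto
    define B2 where "B2 = (\<Sum>j<n. \<Sum>k<n. \<bar>beta j k\<bar> + \<bar>abar j k\<bar>)"
    define M where "M = B1 + B2"
    have B2: "B2 \<ge> 0" unfolding B2_def by (auto intro!: sum_nonneg)
    have M0: "M \<ge> 0" using B1 B2 by (simp add: M_def)
    have bnd: "\<bar>s j t\<bar> \<le> M \<and> \<bar>x j t\<bar> \<le> M \<and> \<bar>op j t\<bar> \<le> M \<and> \<bar>g j t\<bar> \<le> M"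
      if "j < n" "t \<in> {0..T}" for j t
    proof -
      have "\<bar>s j t\<bar> + \<bar>x j t\<bar> + \<bar>op j t\<bar> + \<bar>g j t\<bar> \<le> Hb t"
        unfolding Hb_def by (rule member_le_sum) (use that in auto)
      moreover have "Hb t \<le> B1" using B1(2)[OF that(2)] by simp
      ultimately show ?thesis using B2 unfolding M_def by auto
    qed
    have bjk: "\<bar>beta j k\<bar> + \<bar>abar j k\<bar> \<le> M" if "j < n" "k < n" for j k
    proof -
      have "\<bar>beta j k\<bar> + \<bar>abar j k\<bar> \<le> (\<Sum>k<n. \<bar>beta j k\<bar> + \<bar>abar j k\<bar>)"
        by (rule member_le_sum) (use that in auto)
      also have "\<dots> \<le> B2" unfolding B2_def
        by (rule member_le_sum[where f="\<lambda>j. \<Sum>k<n. \<bar>beta j k\<bar> + \<bar>abar j k\<bar>"])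
           (use that in \<open>auto intro!: sum_nonneg\<close>)
      finally show ?thesis using B1 unfolding M_def by simp
    qed
    define K where "K = M + (M + beta_min) * M"
    define C where "C = real n * (2*(real n*K*M) + 2*M + 2*(real n*(2*K*M + M*M*M)) + 2 + 2*(real n*M))"
    have VC: "V' t \<le> C * V t" if "t \<in> {0..T}" for t
    proof -
      have "V' t \<le> real n * (2*(real n*K*M) + 2*M + 2*(real n*(2*K*M + M*M*M)) + 2 + 2*(real n*M)) * V t"
        unfolding V'_def V_def K_def F_def
      proof (rule key_bound[where S="\<lambda>j. s j t" and X="\<lambda>j. x j t" and Op="\<lambda>j. op j t"
              and g="\<lambda>j. g j t" and a=abar and Nb="in_nbrs n beta", OF M0 beta_min_pos])
        show "\<And>j. j < n \<Longrightarrow> \<bar>s j t\<bar> \<le> M" "\<And>j. j < n \<Longrightarrow> \<bar>x j t\<bar> \<le> M"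
          "\<And>j. j < n \<Longrightarrow> \<bar>op j t\<bar> \<le> M" "\<And>j. j < n \<Longrightarrow> \<bar>g j t\<bar> \<le> M"
          using bnd that by auto
        show "\<And>j k. j < n \<Longrightarrow> k < n \<Longrightarrow> 0 \<le> abar j k \<and> abar j k \<le> M"
          using bjk abar_nonneg by (smt (verit))
        show "\<And>j k. j < n \<Longrightarrow> k < n \<Longrightarrow> \<bar>beta j k\<bar> \<le> M"
          using bjk by (smt (verit))
        show "\<And>j k. j < n \<Longrightarrow> k \<in> in_nbrs n beta j \<Longrightarrow> beta_min \<le> beta j k"
          using beta_ge by blast
        show "\<And>j. j < n \<Longrightarrow> in_nbrs n beta j \<subseteq> {..<n}" using Nb by blast
      qed
      then show ?thesis unfolding C_def .
    qed
    define W where "W t = exp (- C * t) * V t" for t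
    have "W T \<le> W 0"
    proof (rule deriv_nonpos_mono[OF T0])
      fix t assume t: "0 \<le> t" "t \<le> T"
      have e: "((\<lambda>t. exp (- C * t)) has_real_derivative exp (- C * t) * (- C)) (at t within {0..})"
        by (auto intro!: derivative_eq_intros)
      have Weq: "W = (\<lambda>t. exp (- C * t) * V t)" by (simp add: W_def fun_eq_iff)
      have "(W has_real_derivative (exp (- C * t) * V' t + exp (- C * t) * (- C) * V t)) (at t within {0..})"
        unfolding Weq by (rule DERIV_mult'[OF e dV[OF t(1)]])
      then show "(W has_real_derivative (exp (- C * t) * V' t + exp (- C * t) * (- C) * V t)) (at t within {0..T})"
        by (rule DERIV_subset) auto
      have "exp (- C * t) * V' t + exp (- C * t) * (- C) * V t = exp (- C * t) * (V' t - C * V t)"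
        by (simp add: algebra_simps)
      also have "\<dots> \<le> 0" using VC[of t] t by (simp add: mult_nonneg_nonpos)
      finally show "exp (- C * t) * V' t + exp (- C * t) * (- C) * V t \<le> 0" .
    qed
    then have "exp (- C * T) * V T \<le> 0" using Vinit by (simp add: W_def)
    then have "V T \<le> 0" by (simp add: mult_le_0_iff)
    then show ?thesis using V0[of T] by linarith
  qed
  have inv: "s j t \<ge> 0 \<and> x j t \<ge> 0 \<and> op j t \<le> 1" if "j < n" "t \<ge> 0" for j t
  proof -
    have "V t = 0" using Vzero[OF that(2)] .
    then have "\<forall>j\<in>{..<n}. (max 0 (- s j t))^2 + (max 0 (- x j t))^2 + (max 0 (op j t - 1))^2 = 0"
      unfolding V_def by (subst (asm) sum_nonneg_eq_0_iff) auto
    then have "(max 0 (- s j t))^2 + (max 0 (- x j t))^2 + (max 0 (op j t - 1))^2 = 0" using that by auto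
    then have "max 0 (- s j t) = 0 \<and> max 0 (- x j t) = 0 \<and> max 0 (op j t - 1) = 0"
      by (simp add: add_nonneg_eq_0_iff)
    then show ?thesis by (auto simp: max_def split: if_splits)
  qed
  show ?thesis
  proof (intro allI impI)
    fix i :: nat and t1 t2 :: real assume i: "i < n" and t: "0 \<le> t1" "t1 \<le> t2"
    show "s i t2 \<le> s i t1"
    proof (rule deriv_nonpos_mono[OF t(2)])
      fix t assume tt: "t1 \<le> t" "t \<le> t2"
      then have t0: "t \<ge> 0" using t by linarith
      show "(s i has_real_derivative (- s i t * F i t)) (at t within {t1..t2})"
        using DERIV_subset[OF ds[OF i t0], of "{t1..t2}"] t unfolding F_def by auto
      have "F i t \<ge> 0" unfolding F_def
      proof (rule sum_nonneg)
        fix k assume k: "k \<in> in_nbrs n beta i"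
        then have kn: "k < n" by (simp add: in_nbrs_def)
        have "beta i k - (beta i k - beta_min) * op i t = beta_min + (beta i k - beta_min) * (1 - op i t)"
          by (simp add: algebra_simps)
        also have "\<dots> \<ge> 0" using beta_ge[OF i k] beta_min_pos inv[OF i t0] by simp
        finally show "0 \<le> (beta i k - (beta i k - beta_min) * op i t) * x k t"
          using inv[OF kn t0] by simp
      qed
      then show "- s i t * F i t \<le> 0" using inv[OF i t0] by (simp add: mult_nonneg_nonneg)
    qed
  qed
qed

end
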